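(* Suppose $\mathcal U$ is quasiconvex and strongly stable with parameters $a,b,q$, and let $L=b\bigl(1+\max_{i,j\in\mathbb K}\|F^{(i)}-F^{(j)}\|^{q-1}\bigr)$. Then for every admissible policy $\pi$ and every $T\ge1$, $$\tilde{\mathcal R}(\pi,T)\le\frac{L}{T}\sum_{i\ne i^*}\mathbb E[\tau_i(T)]\,\|F^{(i^* )}-F^{(i)}\|.$$
   Context: Bandit setting: $K\ge1$, $\mathbb K=\{1,\dots,K\}$; arm $i$ produces i.i.d. rewards $X^{(i)}_1,X^{(i)}_2,\dots$ with distribution function $F^{(i)}$, all rewards mutually independent. An admissible policy $\pi=(\pi_1,\pi_2,\dots)$ chooses $\pi_t\in\mathbb K$ as a measurable function of an independent randomization variable $V$ and past actions/rewards; $\tau_i(t)=\sum_{s\le t}\mathbf 1\{\pi_s=i\}$, and the reward at time $t$ is $X^\pi_t=X^{(i)}_{\tau_i(t)}$ on $\{\pi_t=i\}$. Empirical distribution functions: $\hat F_t(x_1,\dots,x_t;y)=\frac1t\sum_{s\le t}\mathbf 1\{x_s\le y\}$, $\hat F^{(i)}_t=\hat F_t(X^{(i)}_1,\dots,X^{(i)}_t;\cdot)$; $\hat{\mathcal D}$ is the set of all empirical distribution functions of finite real sequences. $\Delta_{K-1}$ is the probability simplex in $\mathbb R^K$, $F_p=\sum_ip_iF^{(i)}$, $\mathcal D^\Delta=\{F_p:p\in\Delta_{K-1}\}$. $(L,\|\cdot\|)$ is a Banach space of bounded functions on $\mathbb R$ containing $\mathcal D^\Delta\cup\hat{\mathcal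 D}$, and $\mathcal U:L\to\mathbb R$. $\mathcal U$ is quasiconvex if $\mathcal U(\lambda F+(1-\lambda)G)\le\max\{\mathcal U(F),\mathcal U(G)\}$. $\mathcal U$ is strongly stable if (1) there exist $b>0,q\ge1$ with $|\mathcal U(F)-\mathcal U(G)|\le b(\|F-G\|+\|F-G\|^q)$ for all $F\in\mathcal D^\Delta$, $G\in\mathcal D^\Delta\cup\hat{\mathcal D}$, and (2) there is $a>0$ with $\mathbb P(\|\hat F^{(i)}_t-F^{(i)}\|\ge x)\le2\exp(-atx^2)$ for all $i\in\mathbb K$, $x>0$, $t\ge1$. Let $p^*\in\arg\max_{p\in\Delta_{K-1}}\mathcal U(F_p)$, $\Delta_i=\mathcal U(F_{p^*})-\mathcal U(F^{(i)})$ and $i^*\in\arg\min_{i}\Delta_i$. The proxy distribution is $\tilde F^\pi_T=\frac1T\sum_{i=1}^K\tau_i(T)F^{(i)}$ and the proxy regret is $\tilde{\mathcal R}(\pi,T)=\mathbb E[\mathcal U(F_{p^*})-\mathcal U(\tilde F^\pi_T)]$. *)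

theory Defs
  imports "HOL-Probability.Probability"
begin

text \<open>Arms are indexed by {1..K}; rewards of arm i are X i 1, X i 2, ...\<close>

definition prob_simplex :: "nat \<Rightarrow> (nat \<Rightarrow> real) set" where
  "prob_simplex K = {p. (\<forall>i\<in>{1..K}. 0 \<le> p i) \<and> (\<Sum>i\<in>{1..K}. p i) = 1}"

definition mix :: "nat \<Rightarrow> (nat \<Rightarrow> real \<Rightarrow> real) \<Rightarrow> (nat \<Rightarrow> real) \<Rightarrow> real \<Rightarrow> real" where
  "mix K F p = (\<lambda>y. \<Sum>i\<in>{1..K}. p i * F i y)"

definition Dsimplex :: "nat \<Rightarrow> (nat \<Rightarrow> real \<Rightarrow> real) \<Rightarrow> (real \<Rightarrow> real) set" where
  "Dsimplex K F = {mix K F p | p. p \<in> prob_simplex K}"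

definition emp_df :: "real list \<Rightarrow> real \<Rightarrow> real" where
  "emp_df xs = (\<lambda>y. real (length (filter (\<lambda>x. x \<le> y) xs)) / real (length xs))"

definition Dhat :: "(real \<Rightarrow> real) set" where
  "Dhat = {emp_df xs | xs. xs \<noteq> []}"

definition banach_fun_space :: "(real \<Rightarrow> real) set \<Rightarrow> ((real \<Rightarrow> real) \<Rightarrow> real) \<Rightarrow> bool" where
  "banach_fun_space Lset nrm \<longleftrightarrow>
     (\<forall>f\<in>Lset. bounded (range f)) \<and>
     (\<lambda>y. 0) \<in> Lset \<and>
     (\<forall>f\<in>Lset. \<forall>g\<in>Lset. (\<lambda>y. f y + g y) \<in> Lset) \<and>
     (\<forall>f\<in>Lset. \<forall>c::real. (\<lambda>y. c * f y) \<in> Lset) \<and>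
     (\<forall>f\<in>Lset. 0 \<le> nrm f \<and> (nrm f = 0 \<longleftrightarrow> f = (\<lambda>y. 0))) \<and>
     (\<forall>f\<in>Lset. \<forall>c::real. nrm (\<lambda>y. c * f y) = \<bar>c\<bar> * nrm f) \<and>
     (\<forall>f\<in>Lset. \<forall>g\<in>Lset. nrm (\<lambda>y. f y + g y) \<le> nrm f + nrm g) \<and>
     (\<forall>g :: nat \<Rightarrow> real \<Rightarrow> real. (\<forall>n. g n \<in> Lset) \<and>
        (\<forall>e>0. \<exists>N. \<forall>m\<ge>N. \<forall>n\<ge>N. nrm (\<lambda>y. g m y - g n y) < e) \<longrightarrow>
        (\<exists>h\<in>Lset. (\<lambda>n. nrm (\<lambda>y. g n y - h y)) \<longlonglongrightarrow> 0))"

definition quasiconvex_on :: "(real \<Rightarrow> real) set \<Rightarrow> ((real \<Rightarrow> real) \<Rightarrow> real) \<Rightarrow> bool" where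
  "quasiconvex_on Lset U \<longleftrightarrow>
     (\<forall>F\<in>Lset. \<forall>G\<in>Lset. \<forall>l\<in>{0..1::real}.
        U (\<lambda>y. l * F y + (1 - l) * G y) \<le> max (U F) (U G))"

text \<open>Real power with the convention x^0 = 1 (also for x = 0), unlike powr.\<close>
definition rpow :: "real \<Rightarrow> real \<Rightarrow> real" where
  "rpow x r = (if r = 0 then 1 else x powr r)"

text \<open>History of a policy: hist phi X V t w is the function s \<mapsto> (pi_s, reward at s)
  on {1..t} (undefined elsewhere). phi t (v, h) chooses the arm at time t from the
  randomization value v and the history h on {1..<t}.\<close>
fun hist :: "(nat \<Rightarrow> 'v \<times> (nat \<Rightarrow> nat \<times> real) \<Rightarrow> nat) \<Rightarrow> (nat \<Rightarrow> nat \<Rightarrow> 'w \<Rightarrow> real)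
     \<Rightarrow> ('w \<Rightarrow> 'v) \<Rightarrow> nat \<Rightarrow> 'w \<Rightarrow> nat \<Rightarrow> nat \<times> real" where
  "hist phi X V 0 w = (\<lambda>_. undefined)"
| "hist phi X V (Suc t) w =
     (let h = hist phi X V t w; a = phi (Suc t) (V w, h)
      in h(Suc t := (a, X a (Suc (card {s\<in>{1..t}. fst (h s) = a})) w)))"

definition act :: "(nat \<Rightarrow> 'v \<times> (nat \<Rightarrow> nat \<times> real) \<Rightarrow> nat) \<Rightarrow> (nat \<Rightarrow> nat \<Rightarrow> 'w \<Rightarrow> real)
     \<Rightarrow> ('w \<Rightarrow> 'v) \<Rightarrow> nat \<Rightarrow> 'w \<Rightarrow> nat" where
  "act phi X V t w = fst (hist phi X V t w t)"

definition tau :: "(nat \<Rightarrow> 'v \<times> (nat \<Rightarrow> nat \<times> real) \<Rightarrow> nat) \<Rightarrow> (nat \<Rightarrow> nat \<Rightarrow> 'w \<Rightarrow> real)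
     \<Rightarrow> ('w \<Rightarrow> 'v) \<Rightarrow> nat \<Rightarrow> nat \<Rightarrow> 'w \<Rightarrow> nat" where
  "tau phi X V i t w = card {s\<in>{1..t}. act phi X V s w = i}"

definition admissible :: "nat \<Rightarrow> 'v measure \<Rightarrow> (nat \<Rightarrow> 'v \<times> (nat \<Rightarrow> nat \<times> real) \<Rightarrow> nat) \<Rightarrow> bool" where
  "admissible K MV phi \<longleftrightarrow>
     (\<forall>t\<ge>1. phi t \<in> measurable (MV \<Otimes>\<^sub>M PiM {1..<t} (\<lambda>_. count_space UNIV \<Otimes>\<^sub>M borel))
                                 (count_space {1..K}))"

end

theory Submission
  imports Defs
begin


lemma hist_ext: "hist phi X V t w \<in> extensional {1..t}"
  by (induction t) (auto simp: extensional_def Let_def)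

lemma act_eq: "s \<ge> 1 \<Longrightarrow> act phi X V s w = phi s (V w, hist phi X V (s-1) w)"
  by (cases s) (auto simp: act_def Let_def)

lemma act_in:
  assumes "admissible K MV phi" "V \<in> measurable M MV" "w \<in> space M" "s \<ge> 1"
  shows "act phi X V s w \<in> {1..K}"
proof -
  have m: "phi s \<in> measurable (MV \<Otimes>\<^sub>M PiM {1..<s} (\<lambda>_. count_space UNIV \<Otimes>\<^sub>M borel)) (count_space {1..K})"
    using assms(1,4) unfolding admissible_def by auto
  have e: "{1..<s} = {1..s-1}" using assms(4) by auto
  have "(V w, hist phi X V (s-1) w) \<in> space (MV \<Otimes>\<^sub>M PiM {1..<s} (\<lambda>_. count_space UNIV \<Otimes>\<^sub>M borel))"
    using measurable_space[OF assms(2,3)] hist_ext[of phi X V "s-1" w]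
    using assms(4) by (auto simp: space_pair_measure space_PiM PiE_def extensional_def)
  from measurable_space[OF m this] show ?thesis by (simp add: act_eq[OF assms(4)])
qed

lemma binop_meas:
  fixes f g :: "'a \<Rightarrow> nat"
  assumes "f \<in> measurable M (count_space UNIV)" "g \<in> measurable M (count_space UNIV)"
  shows "(\<lambda>w. h (f w) (g w) :: nat) \<in> measurable M (count_space UNIV)"
proof -
  have "(\<lambda>w. (f w, g w)) \<in> measurable M (count_space UNIV \<Otimes>\<^sub>M count_space UNIV)"
    using assms by (intro measurable_Pair)
  then have "(\<lambda>w. (f w, g w)) \<in> measurable M (count_space UNIV)"
    by (simp add: pair_measure_countable)
  from measurable_compose[OF this, of "\<lambda>(x,y). h x y"] show ?thesis by simp
qed

lemma nat_sum_meas: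
  fixes f :: "'b \<Rightarrow> 'a \<Rightarrow> nat"
  assumes "finite S" "\<And>s. s \<in> S \<Longrightarrow> f s \<in> measurable M (count_space UNIV)"
  shows "(\<lambda>w. \<Sum>s\<in>S. f s w) \<in> measurable M (count_space UNIV)"
  using assms
proof (induction S rule: finite_induct)
  case empty
  then show ?case by simp
next
  case (insert x F)
  then show ?case by (simp add: binop_meas[where h="(+)"])
qed

lemma eq_ind_meas:
  fixes f g :: "'a \<Rightarrow> nat"
  assumes "f \<in> measurable M (count_space UNIV)" "g \<in> measurable M (count_space UNIV)"
  shows "(\<lambda>w. if f w = g w then 1 else (0::nat)) \<in> measurable M (count_space UNIV)"
proof -
  have "(\<lambda>w. (f w, g w)) \<in> measurable M (count_space UNIV \<Otimes>\<^sub>M count_space UNIV)"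
    using assms by (intro measurable_Pair)
  then have "(\<lambda>w. (f w, g w)) \<in> measurable M (count_space UNIV)"
    by (simp add: pair_measure_countable)
  from measurable_compose[OF this, of "\<lambda>(x,y). if x = y then 1 else (0::nat)"] show ?thesis by simp
qed

lemma hist_meas:
  assumes adm: "admissible K MV phi" and V: "V \<in> measurable M MV"
    and X: "\<And>i s. i \<in> {1..K} \<Longrightarrow> s \<ge> 1 \<Longrightarrow> X i s \<in> borel_measurable M"
  shows "\<forall>s. (\<lambda>w. fst (hist phi X V t w s)) \<in> measurable M (count_space UNIV)
            \<and> (\<lambda>w. snd (hist phi X V t w s)) \<in> borel_measurable M"
proof (induction t)
  case 0
  then show ?case by simp
next
  case (Suc t)
  have H: "(\<lambda>w. hist phi X V t w) \<in> measurable M (PiM {1..<Suc t} (\<lambda>_. count_space UNIV \<Otimes>\<^sub>M borel))"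
  proof -
    have "(\<lambda>w s. hist phi X V t w s) \<in> measurable M (PiM {1..<Suc t} (\<lambda>_. count_space UNIV \<Otimes>\<^sub>M borel))"
    proof (rule measurable_PiM_single')
      fix s
      have "(\<lambda>w. (fst (hist phi X V t w s), snd (hist phi X V t w s))) \<in> measurable M (count_space UNIV \<Otimes>\<^sub>M borel)"
        using Suc.IH by (intro measurable_Pair) auto
      then show "(\<lambda>w. hist phi X V t w s) \<in> measurable M (count_space UNIV \<Otimes>\<^sub>M borel)" by simp
    next
      show "(\<lambda>w s. hist phi X V t w s) \<in> space M \<rightarrow> (\<Pi>\<^sub>E i\<in>{1..<Suc t}. space (count_space UNIV \<Otimes>\<^sub>M borel))"
        using hist_ext[of phi X V t] by (auto simp: space_pair_measure PiE_def extensional_def atLeastLessThanSuc_atLeastAtMost)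
    qed
    then show ?thesis by simp
  qed
  define a where "a w = phi (Suc t) (V w, hist phi X V t w)" for w
  have a0: "a \<in> measurable M (count_space {1..K})"
  proof -
    have m: "phi (Suc t) \<in> measurable (MV \<Otimes>\<^sub>M PiM {1..<Suc t} (\<lambda>_. count_space UNIV \<Otimes>\<^sub>M borel)) (count_space {1..K})"
      using adm unfolding admissible_def by auto
    show ?thesis unfolding a_def
      by (rule measurable_compose[OF _ m]) (intro measurable_Pair V H)
  qed
  have aK: "a w \<in> {1..K}" if "w \<in> space M" for w
    using measurable_space[OF a0 that] by simp
  have a: "a \<in> measurable M (count_space UNIV)"
    by (rule measurable_compose[OF a0, of "\<lambda>x. x"]) simp
  define n where "n w = Suc (card {s\<in>{1..t}. fst (hist phi X V t w s) = a w})" for w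
  have n: "n \<in> measurable M (count_space UNIV)"
  proof -
    have c: "card {s\<in>{1..t}. fst (hist phi X V t w s) = a w} = (\<Sum>s\<in>{1..t}. if fst (hist phi X V t w s) = a w then 1 else 0)" for w
      by (simp add: sum.If_cases) (rule arg_cong[where f=card]; auto)
    have "(\<lambda>w. (\<Sum>s\<in>{1..t}. if fst (hist phi X V t w s) = a w then 1 else (0::nat))) \<in> measurable M (count_space UNIV)"
      using Suc.IH a by (intro nat_sum_meas eq_ind_meas) auto
    from measurable_compose[OF this, of Suc] show ?thesis unfolding n_def c by simp
  qed
  define f where "f i m w = (if i \<in> {1..K} \<and> m \<ge> 1 then X i m w else 0)" for i m w
  have f: "f i m \<in> borel_measurable M" for i m
    unfolding f_def using X by (cases "i \<in> {1..K} \<and> m \<ge> 1") auto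
  have "(\<lambda>w. f i (n w) w) \<in> borel_measurable M" for i
    by (rule measurable_compose_countable'[OF _ n]) (auto simp: f)
  then have "(\<lambda>w. f (a w) (n w) w) \<in> borel_measurable M"
    by (rule measurable_compose_countable'[OF _ a, of "\<lambda>i w. f i (n w) w"]) auto
  then have Xa: "(\<lambda>w. X (a w) (n w) w) \<in> borel_measurable M"
    by (rule measurable_cong[THEN iffD1, rotated]) (auto simp: f_def n_def dest!: aK)
  have eq: "hist phi X V (Suc t) w = (hist phi X V t w)(Suc t := (a w, X (a w) (n w) w))" for w
    by (simp add: Let_def a_def n_def)
  show ?case
  proof
    fix s
    show "(\<lambda>w. fst (hist phi X V (Suc t) w s)) \<in> measurable M (count_space UNIV) \<and>
          (\<lambda>w. snd (hist phi X V (Suc t) w s)) \<in> borel_measurable M"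
      using Suc.IH a Xa by (cases "s = Suc t") (auto simp del: hist.simps simp: eq)
  qed
qed

lemma tau_meas:
  assumes adm: "admissible K MV phi" and V: "V \<in> measurable M MV"
    and X: "\<And>i s. i \<in> {1..K} \<Longrightarrow> s \<ge> 1 \<Longrightarrow> X i s \<in> borel_measurable M"
  shows "(\<lambda>w. real (tau phi X V i T w)) \<in> borel_measurable M"
proof -
  have A: "(\<lambda>w. act phi X V s w) \<in> measurable M (count_space UNIV)" for s
    using hist_meas[OF assms, where t=s] unfolding act_def by auto
  have c: "tau phi X V i T w = (\<Sum>s\<in>{1..T}. if act phi X V s w = i then 1 else 0)" for w
    by (simp add: tau_def sum.If_cases) (rule arg_cong[where f=card]; auto)
  have "(\<lambda>w. (\<Sum>s\<in>{1..T}. if act phi X V s w = i then 1 else (0::nat))) \<in> measurable M (count_space UNIV)"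
    using A by (intro nat_sum_meas eq_ind_meas) auto
  from measurable_compose[OF this, of real] show ?thesis unfolding c by simp
qed



lemma bfs_sum:
  assumes B: "banach_fun_space Lset nrm" and S: "finite S" and H: "\<And>i. i \<in> S \<Longrightarrow> H i \<in> Lset"
  shows "(\<lambda>y. \<Sum>i\<in>S. c i * H i y) \<in> Lset \<and> nrm (\<lambda>y. \<Sum>i\<in>S. c i * H i y) \<le> (\<Sum>i\<in>S. \<bar>c i\<bar> * nrm (H i))"
  using S H
proof (induction S rule: finite_induct)
  case empty
  have z: "(\<lambda>y::real. 0::real) \<in> Lset" using B unfolding banach_fun_space_def by blast
  have "nrm (\<lambda>y::real. 0::real) = 0" using B z unfolding banach_fun_space_def by blast
  then show ?case using z by simp
next
  case (insert x S)
  have add: "\<And>f g. f \<in> Lset \<Longrightarrow> g \<in> Lset \<Longrightarrow> (\<lambda>y. f y + g y) \<in> Lset"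
    and tri: "\<And>f g. f \<in> Lset \<Longrightarrow> g \<in> Lset \<Longrightarrow> nrm (\<lambda>y. f y + g y) \<le> nrm f + nrm g"
    using B unfolding banach_fun_space_def by blast+
  have Hx: "H x \<in> Lset" using insert by auto
  have cH: "(\<lambda>y. c x * H x y) \<in> Lset" using B Hx unfolding banach_fun_space_def by blast
  have IH: "(\<lambda>y. \<Sum>i\<in>S. c i * H i y) \<in> Lset" "nrm (\<lambda>y. \<Sum>i\<in>S. c i * H i y) \<le> (\<Sum>i\<in>S. \<bar>c i\<bar> * nrm (H i))"
    using insert by auto
  have eq: "(\<lambda>y. \<Sum>i\<in>insert x S. c i * H i y) = (\<lambda>y. (\<lambda>y. c x * H x y) y + (\<lambda>y. \<Sum>i\<in>S. c i * H i y) y)"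
    using insert by simp
  have mem: "(\<lambda>y. (\<lambda>y. c x * H x y) y + (\<lambda>y. \<Sum>i\<in>S. c i * H i y) y) \<in> Lset"
    using add[OF cH IH(1)] by simp
  have "nrm (\<lambda>y. (\<lambda>y. c x * H x y) y + (\<lambda>y. \<Sum>i\<in>S. c i * H i y) y)
        \<le> nrm (\<lambda>y. c x * H x y) + nrm (\<lambda>y. \<Sum>i\<in>S. c i * H i y)"
    using tri[OF cH IH(1)] by simp
  also have "nrm (\<lambda>y. c x * H x y) = \<bar>c x\<bar> * nrm (H x)"
    using B Hx unfolding banach_fun_space_def by auto
  finally show ?case using eq mem IH(2) insert by simp
qed

lemma mix_supp:
  assumes "S \<subseteq> {1..K}" "\<forall>i\<in>{1..K}-S. p i = 0"
  shows "mix K F p = (\<lambda>y. \<Sum>i\<in>S. p i * F i y)"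
  unfolding mix_def
proof
  fix y show "(\<Sum>i\<in>{1..K}. p i * F i y) = (\<Sum>i\<in>S. p i * F i y)"
    using assms by (intro sum.mono_neutral_right) auto
qed

lemma unit_simplex:
  assumes "x \<in> {1..K}"
  shows "(\<lambda>j. if j = x then 1 else 0) \<in> prob_simplex K"
    and "mix K F (\<lambda>j. if j = x then 1 else 0) = F x"
proof -
  show "(\<lambda>j. if j = x then 1 else 0) \<in> prob_simplex K" using assms by (auto simp: prob_simplex_def)
  have "(\<Sum>i\<in>{1..K}. (if i = x then 1 else 0) * F i y) = (\<Sum>i\<in>{1..K}. if i = x then F i y else 0)" for y
    by (intro sum.cong) auto
  then show "mix K F (\<lambda>j. if j = x then 1 else 0) = F x" using assms by (auto simp: mix_def)
qed

lemma F_in_D: assumes "x \<in> {1..K}" shows "F x \<in> Dsimplex K F"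
proof -
  have "F x = mix K F (\<lambda>j. if j = x then 1 else 0)" using unit_simplex(2)[OF assms] by simp
  then show ?thesis using unit_simplex(1)[OF assms] unfolding Dsimplex_def by blast
qed

lemma qc_bound:
  assumes qc: "quasiconvex_on Lset U" and DL: "Dsimplex K F \<subseteq> Lset"
    and c: "\<forall>i\<in>{1..K}. U (F i) \<le> c"
    and S: "finite S" "S \<noteq> {}" "S \<subseteq> {1..K}"
  shows "\<forall>p. p \<in> prob_simplex K \<and> (\<forall>i\<in>{1..K}-S. p i = 0) \<longrightarrow> U (mix K F p) \<le> c"
  using S
proof (induction S rule: finite_ne_induct)
  case (singleton x)
  show ?case
  proof (intro allI impI)
    fix p assume p: "p \<in> prob_simplex K \<and> (\<forall>i\<in>{1..K}-{x}. p i = 0)"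
    have "(\<Sum>i\<in>{1..K}. p i) = (\<Sum>i\<in>{x}. p i)"
      using p singleton by (intro sum.mono_neutral_right) auto
    then have px: "p x = 1" using p by (simp add: prob_simplex_def)
    have "mix K F p = F x" using mix_supp[of "{x}" K p F] p singleton px by auto
    then show "U (mix K F p) \<le> c" using c singleton by auto
  qed
next
  case (insert x S)
  show ?case
  proof (intro allI impI)
    fix p assume p: "p \<in> prob_simplex K \<and> (\<forall>i\<in>{1..K}-insert x S. p i = 0)"
    have xK: "x \<in> {1..K}" using insert.prems by simp
    have Ssub: "S \<subseteq> {1..K}" using insert.prems by simp
    have nn: "\<forall>i\<in>{1..K}. 0 \<le> p i" and s1: "(\<Sum>i\<in>{1..K}. p i) = 1"
      using p by (auto simp: prob_simplex_def)
    have px1: "p x \<le> 1" using member_le_sum[of x "{1..K}" p] nn s1 xK by auto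
    have px0: "0 \<le> p x" using nn xK by auto
    have mixp: "mix K F p = (\<lambda>y. p x * F x y + (\<Sum>i\<in>S. p i * F i y))"
      using mix_supp[of "insert x S" K p F] p insert.prems insert.hyps by auto
    have sumS: "(\<Sum>i\<in>S. p i) = 1 - p x"
    proof -
      have "(\<Sum>i\<in>{1..K}. p i) = (\<Sum>i\<in>insert x S. p i)"
        using p insert.prems by (intro sum.mono_neutral_right) auto
      then show ?thesis using s1 insert.hyps by simp
    qed
    show "U (mix K F p) \<le> c"
    proof (cases "p x = 1")
      case True
      then have "(\<Sum>i\<in>S. p i) = 0" using sumS by simp
      moreover have "\<forall>i\<in>S. 0 \<le> p i" using nn Ssub by blast
      ultimately have z: "\<forall>i\<in>S. p i = 0" using sum_nonneg_eq_0_iff[OF insert.hyps(1)] by metis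
      have "mix K F p = F x"
      proof
        fix y
        have "(\<Sum>i\<in>S. p i * F i y) = 0" using z by simp
        then show "mix K F p y = F x y" using mixp True by simp
      qed
      then show ?thesis using c xK by simp
    next
      case False
      define l where "l = 1 - p x"
      have l0: "0 < l" using False px1 by (simp add: l_def)
      define p' where "p' i = (if i \<in> S then p i / l else 0)" for i
      have p'S: "p' \<in> prob_simplex K"
      proof -
        have "(\<Sum>i\<in>{1..K}. p' i) = (\<Sum>i\<in>S. p' i)"
          using Ssub by (intro sum.mono_neutral_right) (auto simp: p'_def)
        also have "\<dots> = (\<Sum>i\<in>S. p i) / l" by (simp add: p'_def sum_divide_distrib)
        also have "\<dots> = 1" using sumS l0 by (simp add: l_def)
        finally show ?thesis using nn l0 Ssub by (auto simp: prob_simplex_def p'_def)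
      qed
      have p'0: "\<forall>i\<in>{1..K}-S. p' i = 0" by (simp add: p'_def)
      have ih: "U (mix K F p') \<le> c" using insert.IH[OF Ssub] p'S p'0 by blast
      have mixp': "mix K F p' = (\<lambda>y. \<Sum>i\<in>S. p' i * F i y)"
        using mix_supp[of S K p' F] p'0 Ssub by auto
      have eq: "mix K F p = (\<lambda>y. l * mix K F p' y + (1 - l) * F x y)"
      proof
        fix y
        have "l * (\<Sum>i\<in>S. p' i * F i y) = (\<Sum>i\<in>S. p i * F i y)"
          using l0 by (simp add: sum_distrib_left p'_def)
        then show "mix K F p y = l * mix K F p' y + (1 - l) * F x y"
          using mixp mixp' by (simp add: l_def)
      qed
      have m1: "mix K F p' \<in> Lset" using DL p'S unfolding Dsimplex_def by blast
      have m2: "F x \<in> Lset" using DL F_in_D[OF xK] by blast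
      have qc': "\<And>G1 G2 t. G1 \<in> Lset \<Longrightarrow> G2 \<in> Lset \<Longrightarrow> t \<in> {0..1} \<Longrightarrow>
          U (\<lambda>y. t * G1 y + (1 - t) * G2 y) \<le> max (U G1) (U G2)"
        using qc unfolding quasiconvex_on_def by blast
      have lin: "l \<in> {0..1}" using l0 px0 unfolding l_def by auto
      have "U (mix K F p) \<le> max (U (mix K F p')) (U (F x))"
        unfolding eq by (rule qc'[OF m1 m2 lin])
      moreover have "U (F x) \<le> c" using c xK by blast
      ultimately show ?thesis using ih by linarith
    qed
  qed
qed

lemma real_bound:
  fixes N D M0 R b q :: real
  assumes "0 \<le> N" "N \<le> D" "D \<le> M0" "rpow M0 (q-1) \<le> R" "q \<ge> 1" "b > 0"
  shows "b * (N + N powr q) \<le> b * (1 + R) * D"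
proof -
  have D0: "0 \<le> D" using assms by linarith
  have "N powr q \<le> D powr q" using assms by (intro powr_mono2) auto
  moreover have "D powr q \<le> D * R"
  proof (cases "D = 0")
    case True then show ?thesis using assms by simp
  next
    case False
    then have Dp: "D > 0" using D0 by simp
    have "D powr q = D powr (1 + (q - 1))" by simp
    also have "\<dots> = D powr 1 * D powr (q - 1)" by (rule powr_add)
    also have "\<dots> = D * D powr (q-1)" using Dp by simp
    also have "D powr (q-1) \<le> R"
    proof (cases "q = 1")
      case True then show ?thesis using assms Dp by (simp add: rpow_def)
    next
      case False
      then have "D powr (q-1) \<le> M0 powr (q-1)" using assms D0 by (intro powr_mono2) auto
      then show ?thesis using assms False by (simp add: rpow_def)
    qed
    then have "D * D powr (q-1) \<le> D * R" using Dp by (intro mult_left_mono) auto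
    finally show ?thesis .
  qed
  ultimately have "N + N powr q \<le> (1 + R) * D" using assms by (simp add: algebra_simps)
  then show ?thesis using assms by (simp add: mult.assoc mult_left_mono)
qed

lemma sum_tau:
  assumes "admissible K MV phi" "V \<in> measurable M MV" "w \<in> space M"
  shows "(\<Sum>i\<in>{1..K}. tau phi X V i T w) = T"
proof -
  have "(\<Sum>i\<in>{1..K}. tau phi X V i T w) = (\<Sum>i\<in>{1..K}. \<Sum>s\<in>{1..T}. if act phi X V s w = i then 1 else 0)"
    by (intro sum.cong refl) (simp add: tau_def sum.If_cases, rule arg_cong[where f=card]; auto)
  also have "\<dots> = (\<Sum>s\<in>{1..T}. \<Sum>i\<in>{1..K}. if act phi X V s w = i then 1 else 0)"
    by (rule sum.swap)
  also have "\<dots> = (\<Sum>s\<in>{1..T}. 1)"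
    using act_in[OF assms] by (intro sum.cong refl) auto
  finally show ?thesis by simp
qed

lemma tau_le: "tau phi X V i T w \<le> T"
proof -
  have "card {s\<in>{1..T}. act phi X V s w = i} \<le> card {1..T}" by (rule card_mono) auto
  then show ?thesis by (simp add: tau_def)
qed



theorem lemma6:
  fixes M :: "'w measure" and MV :: "'v measure" and V :: "'w \<Rightarrow> 'v"
    and X :: "nat \<Rightarrow> nat \<Rightarrow> 'w \<Rightarrow> real" and F :: "nat \<Rightarrow> real \<Rightarrow> real"
    and K :: nat and Lset :: "(real \<Rightarrow> real) set" and nrm :: "(real \<Rightarrow> real) \<Rightarrow> real"
    and U :: "(real \<Rightarrow> real) \<Rightarrow> real" and a b q :: real
    and pstar :: "nat \<Rightarrow> real" and istar :: nat
    and phi :: "nat \<Rightarrow> 'v \<times> (nat \<Rightarrow> nat \<times> real) \<Rightarrow> nat" and T :: nat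
  assumes "prob_space M"
    and "K \<ge> 1"
    and "V \<in> measurable M MV"
    and "prob_space.indep_vars M (\<lambda>_. borel) (\<lambda>(i, s). X i s) ({1..K} \<times> {1::nat..})"
    and "prob_space.indep_set M {V -` C \<inter> space M | C. C \<in> sets MV}
           (sigma_sets (space M) {X i s -` C \<inter> space M | i s C.
              i \<in> {1..K} \<and> s \<ge> 1 \<and> C \<in> sets borel})"
    and "\<forall>i\<in>{1..K}. \<forall>s\<ge>1. \<forall>y. measure M {w\<in>space M. X i s w \<le> y} = F i y"
    and "banach_fun_space Lset nrm"
    and "Dsimplex K F \<subseteq> Lset" and "Dhat \<subseteq> Lset"
    and "quasiconvex_on Lset U"
    and "b > 0" and "q \<ge> 1"
    and "\<forall>G1\<in>Dsimplex K F. \<forall>G2\<in>Dsimplex K F \<union> Dhat.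
           \<bar>U G1 - U G2\<bar> \<le> b * (nrm (\<lambda>y. G1 y - G2 y) + nrm (\<lambda>y. G1 y - G2 y) powr q)"
    and "a > 0"
    and "\<forall>i\<in>{1..K}. \<forall>x>0. \<forall>t\<ge>1.
           measure M {w\<in>space M. nrm (\<lambda>y. emp_df (map (\<lambda>s. X i s w) [1..<t+1]) y - F i y) \<ge> x}
             \<le> 2 * exp (- a * real t * x\<^sup>2)"
    and "pstar \<in> prob_simplex K"
    and "\<forall>p\<in>prob_simplex K. U (mix K F p) \<le> U (mix K F pstar)"
    and "istar \<in> {1..K}"
    and "\<forall>i\<in>{1..K}. U (mix K F pstar) - U (F istar) \<le> U (mix K F pstar) - U (F i)"
    and "admissible K MV phi"
    and "T \<ge> 1"
  shows "(\<integral>w. U (mix K F pstar)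
               - U (\<lambda>y. (\<Sum>i\<in>{1..K}. real (tau phi X V i T w) * F i y) / real T) \<partial>M)
         \<le> b * (1 + Max {rpow (nrm (\<lambda>y. F i y - F j y)) (q - 1) | i j. i \<in> {1..K} \<and> j \<in> {1..K}})
             / real T * (\<Sum>i\<in>{1..K} - {istar}.
                 (\<integral>w. real (tau phi X V i T w) \<partial>M) * nrm (\<lambda>y. F istar y - F i y))"
proof -
  note A = assms
  let ?A = "{1..K}"
  interpret P: prob_space M by (rule A(1))
  have Xm: "X i s \<in> borel_measurable M" if "i \<in> {1..K}" "s \<ge> 1" for i s
  proof -
    have "\<forall>j\<in>{1..K} \<times> {1::nat..}. (case j of (i, s) \<Rightarrow> X i s) \<in> borel_measurable M"
      using A(4) unfolding P.indep_vars_def by (rule conjunct1)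
    then have "(case (i, s) of (i, s) \<Rightarrow> X i s) \<in> borel_measurable M" using that by blast
    then show ?thesis by simp
  qed
  have B: "banach_fun_space Lset nrm" by (rule A(7))
  have add: "\<And>f g. f \<in> Lset \<Longrightarrow> g \<in> Lset \<Longrightarrow> (\<lambda>y. f y + g y) \<in> Lset"
    and scl: "\<And>f c. f \<in> Lset \<Longrightarrow> (\<lambda>y. c * f y) \<in> Lset"
    and nn: "\<And>f. f \<in> Lset \<Longrightarrow> 0 \<le> nrm f"
    and nz: "\<And>f. f \<in> Lset \<Longrightarrow> nrm f = 0 \<longleftrightarrow> f = (\<lambda>y. 0)"
    using B unfolding banach_fun_space_def by blast+
  have FL: "F i \<in> Lset" if "i \<in> ?A" for i using F_in_D[OF that] A(8) by blast
  have HL: "(\<lambda>y. F i y - F j y) \<in> Lset" if "i \<in> ?A" "j \<in> ?A" for i j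
    using add[OF FL[OF that(1)] scl[OF FL[OF that(2)], of "-1"]] by simp
  define n where "n i = nrm (\<lambda>y. F istar y - F i y)" for i
  have n0: "0 \<le> n i" if "i \<in> ?A" for i using nn[OF HL[OF A(18) that]] by (simp add: n_def)
  have nstar: "n istar = 0" using nz[OF HL[OF A(18) A(18)]] by (simp add: n_def)
  define R where "R = Max {rpow (nrm (\<lambda>y. F i y - F j y)) (q - 1) | i j. i \<in> {1..K} \<and> j \<in> {1..K}}"
  have finR: "finite {rpow (nrm (\<lambda>y. F i y - F j y)) (q - 1) | i j. i \<in> {1..K} \<and> j \<in> {1..K}}"
    by (rule finite_image_set2) auto
  have inR: "rpow (nrm (\<lambda>y. F i y - F j y)) (q - 1) \<le> R" if "i \<in> ?A" "j \<in> ?A" for i j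
    unfolding R_def by (rule Max_ge[OF finR]) (use that in blast)
  have rpow_nn: "\<And>x r. 0 \<le> x \<Longrightarrow> 0 \<le> rpow x r" by (simp add: rpow_def)
  have R0: "0 \<le> R" using inR[OF A(18) A(18)] rpow_nn[OF nn[OF HL[OF A(18) A(18)]], of "q - 1"] by linarith
  obtain i0 where i0: "i0 \<in> ?A" "\<forall>i\<in>?A. n i \<le> n i0"
  proof -
    have "Max (n ` ?A) \<in> n ` ?A" using A(2) by (intro Max_in) auto
    then obtain i0 where "i0 \<in> ?A" "n i0 = Max (n ` ?A)" by auto
    then show ?thesis using that by (metis Max_ge finite_atLeastAtMost finite_imageI imageI)
  qed
  have M0R: "rpow (n i0) (q - 1) \<le> R" using inR[OF A(18) i0(1)] by (simp add: n_def)
  have cU: "\<forall>i\<in>?A. U (F i) \<le> U (F istar)" using A(19) by auto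
  have ustar: "U (mix K F pstar) = U (F istar)"
  proof -
    have "U (mix K F pstar) \<le> U (F istar)"
      using qc_bound[OF A(10) A(8) cU, of ?A] A(16) A(2) by auto
    moreover have "U (F istar) \<le> U (mix K F pstar)"
      using A(17) unit_simplex(1)[OF A(18)] unit_simplex(2)[OF A(18), of F] by metis
    ultimately show ?thesis by simp
  qed
  define C where "C = b * (1 + R) / real T"
  define g where "g w = C * (\<Sum>i\<in>?A - {istar}. real (tau phi X V i T w) * n i)" for w
  have Tpos: "real T > 0" using A(21) by simp
  have point: "U (mix K F pstar) - U (\<lambda>y. (\<Sum>i\<in>{1..K}. real (tau phi X V i T w) * F i y) / real T) \<le> g w"
    if w: "w \<in> space M" for w
  proof -
    define pp where "pp i = real (tau phi X V i T w) / real T" for i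
    have sp: "(\<Sum>i\<in>?A. pp i) = 1"
    proof -
      have "(\<Sum>i\<in>?A. real (tau phi X V i T w)) = real T"
        using sum_tau[OF A(20) A(3) w, of X T] by (metis of_nat_sum)
      then show ?thesis using Tpos by (simp add: pp_def sum_divide_distrib[symmetric])
    qed
    have pp0: "\<forall>i\<in>?A. 0 \<le> pp i" by (simp add: pp_def)
    have ppS: "pp \<in> prob_simplex K" using sp pp0 by (simp add: prob_simplex_def)
    have tF: "(\<lambda>y. (\<Sum>i\<in>{1..K}. real (tau phi X V i T w) * F i y) / real T) = mix K F pp"
      by (auto simp: mix_def pp_def sum_divide_distrib)
    have mD: "mix K F pp \<in> Dsimplex K F" using ppS unfolding Dsimplex_def by blast
    have diff: "(\<lambda>y. F istar y - mix K F pp y) = (\<lambda>y. \<Sum>i\<in>?A. pp i * (\<lambda>y. F istar y - F i y) y)"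
    proof
      fix y
      have "F istar y = (\<Sum>i\<in>?A. pp i) * F istar y" using sp by simp
      then show "F istar y - mix K F pp y = (\<Sum>i\<in>?A. pp i * (\<lambda>y. F istar y - F i y) y)"
        by (simp add: mix_def sum_distrib_right right_diff_distrib sum_subtractf)
    qed
    define N where "N = nrm (\<lambda>y. F istar y - mix K F pp y)"
    define D where "D = (\<Sum>i\<in>?A - {istar}. pp i * n i)"
    have DA: "D = (\<Sum>i\<in>?A. pp i * n i)"
      unfolding D_def using nstar A(18) by (intro sum.mono_neutral_left) auto
    have "N \<le> (\<Sum>i\<in>?A. \<bar>pp i\<bar> * nrm (\<lambda>y. F istar y - F i y))"
      unfolding N_def diff using bfs_sum[OF B, of ?A "\<lambda>i. (\<lambda>y. F istar y - F i y)" pp] HL[OF A(18)] by auto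
    also have "\<dots> = D" unfolding DA using pp0 by (intro sum.cong) (auto simp: n_def)
    finally have ND: "N \<le> D" .
    have N0: "0 \<le> N" unfolding N_def
      using nn[OF add[OF FL[OF A(18)] scl[OF subsetD[OF A(8) mD], of "-1"]]] by simp
    have DM: "D \<le> n i0"
    proof -
      have "D \<le> (\<Sum>i\<in>?A. pp i * n i0)" unfolding DA using pp0 i0 by (intro sum_mono mult_left_mono) auto
      also have "\<dots> = n i0" using sp by (simp add: sum_distrib_right[symmetric])
      finally show ?thesis .
    qed
    have "\<bar>U (F istar) - U (mix K F pp)\<bar> \<le> b * (N + N powr q)"
      using A(13) F_in_D[OF A(18)] mD unfolding N_def by blast
    then have "U (F istar) - U (mix K F pp) \<le> b * (1 + R) * D"
      using real_bound[OF N0 ND DM M0R A(12) A(11)] by linarith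
    also have "b * (1 + R) * D = g w"
      unfolding g_def C_def D_def pp_def by (simp add: sum_distrib_left sum_divide_distrib)
    finally show ?thesis using ustar tF by simp
  qed
  have taum: "(\<lambda>w. real (tau phi X V i T w)) \<in> borel_measurable M" for i
    by (rule tau_meas[OF A(20) A(3)]) (rule Xm; simp)
  have tauI: "integrable M (\<lambda>w. real (tau phi X V i T w))" for i
    by (rule P.integrable_const_bound[where B="real T"]) (auto simp: tau_le taum)
  have gI: "integrable M g" unfolding g_def using tauI by auto
  have g0: "0 \<le> g w" for w
    unfolding g_def C_def using n0 R0 A(11) by (intro mult_nonneg_nonneg sum_nonneg) auto
  have "(\<integral>w. U (mix K F pstar) - U (\<lambda>y. (\<Sum>i\<in>{1..K}. real (tau phi X V i T w) * F i y) / real T) \<partial>M)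
        \<le> (\<integral>w. g w \<partial>M)"
    by (rule integral_mono'[OF gI point g0])
  also have "(\<integral>w. g w \<partial>M) = C * (\<Sum>i\<in>?A - {istar}. (\<integral>w. real (tau phi X V i T w) \<partial>M) * n i)"
    unfolding g_def using tauI by (simp add: integral_sum)
  finally show ?thesis by (simp add: C_def R_def n_def)
qed

end
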